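(* Let $\beta:(H_1,V_1)\to(H_2,V_2)$ be a homomorphism of finite forest algebras and let $\Lambda\subseteq H_1$ be a reachability class. Then there is a reachability class $\Gamma$ of $(H_2,V_2)$ with $\beta(\Lambda)\subseteq\Gamma$. If $\beta$ is onto and $\Lambda$ is a minimal class of $(H_1,V_1)$ with $\beta(\Lambda)\subseteq\Gamma$, then $\beta(\Lambda)=\Gamma$. If, further, $H_2$ is idempotent and commutative, then there is only one such minimal class $\Lambda$.
   Context: A forest algebra $(H,V)$: additive monoid $H$, monoid $V$ acting faithfully on the left, with $g\mapsto g+h$ and $g\mapsto h+g$ in $V$; a homomorphism is a pair of monoid homomorphisms compatible with the action. Throughout, finite forest algebras have idempotent and commutative horizontal monoid. Reachability: $h\le h'$ iff $h=vh'$ for some $v\in V$; reachability classes are the classes of the relation ($h\le h'$ and $h'\le h$), partially ordered by $\le$. "Minimal class with $\beta(\Lambda)\subseteq\Gamma$" means minimal among the classes of $(H_1,V_1)$ whose image lies in $\Gamma$. *)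

theory Defs
  imports Main
begin

record ('h, 'v) fa =
  hcar  :: "'h set"
  hadd  :: "'h \<Rightarrow> 'h \<Rightarrow> 'h"
  hzero :: "'h"
  vcar  :: "'v set"
  vmul  :: "'v \<Rightarrow> 'v \<Rightarrow> 'v"
  vone  :: "'v"
  act   :: "'v \<Rightarrow> 'h \<Rightarrow> 'h"

definition forest_algebra :: "('h, 'v) fa \<Rightarrow> bool" where
  "forest_algebra A \<longleftrightarrow>
     \<comment> \<open>H is a monoid\<close>
     (\<forall>g\<in>hcar A. \<forall>h\<in>hcar A. hadd A g h \<in> hcar A) \<and>
     hzero A \<in> hcar A \<and>
     (\<forall>f\<in>hcar A. \<forall>g\<in>hcar A. \<forall>h\<in>hcar A. hadd A (hadd A f g) h = hadd A f (hadd A g h)) \<and>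
     (\<forall>h\<in>hcar A. hadd A (hzero A) h = h \<and> hadd A h (hzero A) = h) \<and>
     \<comment> \<open>V is a monoid\<close>
     (\<forall>v\<in>vcar A. \<forall>w\<in>vcar A. vmul A v w \<in> vcar A) \<and>
     vone A \<in> vcar A \<and>
     (\<forall>u\<in>vcar A. \<forall>v\<in>vcar A. \<forall>w\<in>vcar A. vmul A (vmul A u v) w = vmul A u (vmul A v w)) \<and>
     (\<forall>v\<in>vcar A. vmul A (vone A) v = v \<and> vmul A v (vone A) = v) \<and>
     \<comment> \<open>left action\<close>
     (\<forall>v\<in>vcar A. \<forall>h\<in>hcar A. act A v h \<in> hcar A) \<and>
     (\<forall>h\<in>hcar A. act A (vone A) h = h) \<and>
     (\<forall>v\<in>vcar A. \<forall>w\<in>vcar A. \<forall>h\<in>hcar A. act A (vmul A v w) h = act A v (act A w h)) \<and>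
     \<comment> \<open>faithfulness\<close>
     (\<forall>v\<in>vcar A. \<forall>w\<in>vcar A. (\<forall>h\<in>hcar A. act A v h = act A w h) \<longrightarrow> v = w) \<and>
     \<comment> \<open>insertion: g |-> g + h and g |-> h + g belong to V\<close>
     (\<forall>h\<in>hcar A. (\<exists>v\<in>vcar A. \<forall>g\<in>hcar A. act A v g = hadd A g h) \<and>
                  (\<exists>v\<in>vcar A. \<forall>g\<in>hcar A. act A v g = hadd A h g))"

definition idem_comm_H :: "('h, 'v) fa \<Rightarrow> bool" where
  "idem_comm_H A \<longleftrightarrow>
     (\<forall>h\<in>hcar A. hadd A h h = h) \<and>
     (\<forall>g\<in>hcar A. \<forall>h\<in>hcar A. hadd A g h = hadd A h g)"

text \<open>Standing convention: finite forest algebras have idempotent and commutative H.\<close>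
definition finite_forest_algebra :: "('h, 'v) fa \<Rightarrow> bool" where
  "finite_forest_algebra A \<longleftrightarrow>
     forest_algebra A \<and> finite (hcar A) \<and> finite (vcar A) \<and> idem_comm_H A"

definition fa_hom :: "('h1, 'v1) fa \<Rightarrow> ('h2, 'v2) fa \<Rightarrow> ('h1 \<Rightarrow> 'h2) \<Rightarrow> ('v1 \<Rightarrow> 'v2) \<Rightarrow> bool" where
  "fa_hom A B bh bv \<longleftrightarrow>
     (\<forall>h\<in>hcar A. bh h \<in> hcar B) \<and>
     (\<forall>g\<in>hcar A. \<forall>h\<in>hcar A. bh (hadd A g h) = hadd B (bh g) (bh h)) \<and>
     bh (hzero A) = hzero B \<and>
     (\<forall>v\<in>vcar A. bv v \<in> vcar B) \<and>
     (\<forall>v\<in>vcar A. \<forall>w\<in>vcar A. bv (vmul A v w) = vmul B (bv v) (bv w)) \<and>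
     bv (vone A) = vone B \<and>
     (\<forall>v\<in>vcar A. \<forall>h\<in>hcar A. bh (act A v h) = act B (bv v) (bh h))"

definition fa_hom_onto :: "('h1, 'v1) fa \<Rightarrow> ('h2, 'v2) fa \<Rightarrow> ('h1 \<Rightarrow> 'h2) \<Rightarrow> ('v1 \<Rightarrow> 'v2) \<Rightarrow> bool" where
  "fa_hom_onto A B bh bv \<longleftrightarrow> bh ` hcar A = hcar B \<and> bv ` vcar A = vcar B"

definition reach :: "('h, 'v) fa \<Rightarrow> 'h \<Rightarrow> 'h \<Rightarrow> bool" where
  "reach A h h' \<longleftrightarrow> h \<in> hcar A \<and> h' \<in> hcar A \<and> (\<exists>v\<in>vcar A. h = act A v h')"

definition reach_class :: "('h, 'v) fa \<Rightarrow> 'h set \<Rightarrow> bool" where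
  "reach_class A L \<longleftrightarrow>
     (\<exists>h\<in>hcar A. L = {h'\<in>hcar A. reach A h h' \<and> reach A h' h})"

definition class_le :: "('h, 'v) fa \<Rightarrow> 'h set \<Rightarrow> 'h set \<Rightarrow> bool" where
  "class_le A L L' \<longleftrightarrow> (\<exists>h\<in>L. \<exists>h'\<in>L'. reach A h h')"

definition minimal_class_into ::
  "('h1, 'v1) fa \<Rightarrow> ('h1 \<Rightarrow> 'h2) \<Rightarrow> 'h2 set \<Rightarrow> 'h1 set \<Rightarrow> bool" where
  "minimal_class_into A bh G L \<longleftrightarrow>
     reach_class A L \<and> bh ` L \<subseteq> G \<and>
     (\<forall>L'. reach_class A L' \<and> bh ` L' \<subseteq> G \<and> class_le A L' L \<longrightarrow> L' = L)"

end

theory Submission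
  imports Defs
begin

definition cls :: "('h, 'v) fa \<Rightarrow> 'h \<Rightarrow> 'h set" where
  "cls A h = {h'\<in>hcar A. reach A h h' \<and> reach A h' h}"

lemma fa_hadd: "forest_algebra A \<Longrightarrow> \<forall>g\<in>hcar A. \<forall>h\<in>hcar A. hadd A g h \<in> hcar A"
  unfolding forest_algebra_def by (elim conjE)
lemma fa_vmul: "forest_algebra A \<Longrightarrow> \<forall>v\<in>vcar A. \<forall>w\<in>vcar A. vmul A v w \<in> vcar A"
  unfolding forest_algebra_def by (elim conjE)
lemma fa_vone: "forest_algebra A \<Longrightarrow> vone A \<in> vcar A"
  unfolding forest_algebra_def by (elim conjE)
lemma fa_act: "forest_algebra A \<Longrightarrow> \<forall>v\<in>vcar A. \<forall>h\<in>hcar A. act A v h \<in> hcar A"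
  unfolding forest_algebra_def by (elim conjE)
lemma fa_actone: "forest_algebra A \<Longrightarrow> \<forall>h\<in>hcar A. act A (vone A) h = h"
  unfolding forest_algebra_def by (elim conjE)
lemma fa_actmul: "forest_algebra A \<Longrightarrow> \<forall>v\<in>vcar A. \<forall>w\<in>vcar A. \<forall>h\<in>hcar A. act A (vmul A v w) h = act A v (act A w h)"
  unfolding forest_algebra_def by (elim conjE)
lemma fa_ins: "forest_algebra A \<Longrightarrow> \<forall>h\<in>hcar A. (\<exists>v\<in>vcar A. \<forall>g\<in>hcar A. act A v g = hadd A g h) \<and>
                  (\<exists>v\<in>vcar A. \<forall>g\<in>hcar A. act A v g = hadd A h g)"
  unfolding forest_algebra_def by (elim conjE)

lemma reach_refl: assumes "forest_algebra A" "h \<in> hcar A" shows "reach A h h"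
proof -
  have "vone A \<in> vcar A" "act A (vone A) h = h" using fa_vone[OF assms(1)] fa_actone[OF assms(1)] assms(2) by auto
  thus ?thesis using assms(2) unfolding reach_def by metis
qed

lemma reach_trans: assumes "forest_algebra A" "reach A a b" "reach A b c" shows "reach A a c"
proof -
  obtain v w where "v \<in> vcar A" "w \<in> vcar A" "a = act A v b" "b = act A w c"
    "a \<in> hcar A" "c \<in> hcar A"
    using assms(2,3) unfolding reach_def by blast
  moreover have "\<forall>v\<in>vcar A. \<forall>w\<in>vcar A. vmul A v w \<in> vcar A"
    "\<forall>v\<in>vcar A. \<forall>w\<in>vcar A. \<forall>h\<in>hcar A. act A (vmul A v w) h = act A v (act A w h)"
    using fa_vmul[OF assms(1)] fa_actmul[OF assms(1)] by auto
  ultimately show ?thesis unfolding reach_def by metis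
qed

lemma cls_mem: "x \<in> cls A h \<longleftrightarrow> x \<in> hcar A \<and> reach A h x \<and> reach A x h"
  unfolding cls_def by simp

lemma cls_eq:
  assumes F: "forest_algebra A" and kk: "k \<in> cls A h" shows "cls A k = cls A h"
proof (rule set_eqI)
  fix x
  have k1: "reach A h k" and k2: "reach A k h" using kk unfolding cls_mem by simp_all
  show "x \<in> cls A k \<longleftrightarrow> x \<in> cls A h" unfolding cls_mem
    by (meson F k1 k2 reach_trans)
qed

lemma reach_class_cls: "reach_class A L \<longleftrightarrow> (\<exists>h\<in>hcar A. L = cls A h)"
  unfolding reach_class_def cls_def by simp

lemma mem_cls: "forest_algebra A \<Longrightarrow> h \<in> hcar A \<Longrightarrow> h \<in> cls A h"
  unfolding cls_mem using reach_refl[of A h] by simp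

lemma hom_reach: assumes "fa_hom A B bh bv" "reach A a b" shows "reach B (bh a) (bh b)"
proof -
  obtain v where v: "v \<in> vcar A" "a = act A v b" "a \<in> hcar A" "b \<in> hcar A"
    using assms(2) unfolding reach_def by blast
  have "bv v \<in> vcar B" "bh a = act B (bv v) (bh b)" "bh a \<in> hcar B" "bh b \<in> hcar B"
    using assms(1) v unfolding fa_hom_def by auto
  thus ?thesis unfolding reach_def by blast
qed

lemma hom_cls: assumes "fa_hom A B bh bv" shows "bh ` cls A h \<subseteq> cls B (bh h)"
proof
  fix y assume "y \<in> bh ` cls A h"
  then obtain z where z: "y = bh z" "reach A h z" "reach A z h" unfolding cls_def by blast
  have "reach B (bh h) (bh z)" "reach B (bh z) (bh h)" using hom_reach[OF assms] z by auto
  moreover have "bh z \<in> hcar B" using calculation(1) unfolding reach_def by blast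
  ultimately show "y \<in> cls B (bh h)" unfolding cls_def z(1) by blast
qed

lemma reach_onto:
  assumes "fa_hom A B bh bv" "fa_hom_onto A B bh bv" "reach B g (bh h)" "h \<in> hcar A"
    "forest_algebra A"
  shows "\<exists>k. reach A k h \<and> bh k = g"
proof -
  from assms(3) obtain w where w: "w \<in> vcar B" "g = act B w (bh h)" unfolding reach_def by blast
  then obtain v where v: "v \<in> vcar A" "w = bv v" using assms(2) unfolding fa_hom_onto_def by blast
  have "bh (act A v h) = g" using assms(1,4) v w unfolding fa_hom_def by simp
  moreover have "act A v h \<in> hcar A" using fa_act[OF assms(5)] assms(4) v by blast
  moreover have "reach A (act A v h) h" using assms(4) v calculation(2) unfolding reach_def by blast
  ultimately show ?thesis by blast
qed

lemma sum_reach: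
  assumes "forest_algebra A" "h \<in> hcar A" "h' \<in> hcar A"
  shows "reach A (hadd A h h') h" "reach A (hadd A h h') h'"
proof -
  have c: "hadd A h h' \<in> hcar A" using fa_hadd[OF assms(1)] assms(2,3) by blast
  have ins: "\<forall>h\<in>hcar A. (\<exists>v\<in>vcar A. \<forall>g\<in>hcar A. act A v g = hadd A g h) \<and>
                  (\<exists>v\<in>vcar A. \<forall>g\<in>hcar A. act A v g = hadd A h g)"
    using fa_ins[OF assms(1)] .
  obtain v where v: "v \<in> vcar A" "\<forall>g\<in>hcar A. act A v g = hadd A g h'"
    using ins assms(3) by blast
  have "hadd A h h' = act A v h" using v(2) assms(2) by simp
  then show "reach A (hadd A h h') h" using c assms(2) v(1) unfolding reach_def by blast
  obtain u where u: "u \<in> vcar A" "\<forall>g\<in>hcar A. act A u g = hadd A h g"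
    using ins assms(2) by blast
  have "hadd A h h' = act A u h'" using u(2) assms(3) by simp
  then show "reach A (hadd A h h') h'" using c assms(3) u(1) unfolding reach_def by blast
qed

theorem lemma3:
  fixes A1 :: "('h1, 'v1) fa" and A2 :: "('h2, 'v2) fa"
    and bh :: "'h1 \<Rightarrow> 'h2" and bv :: "'v1 \<Rightarrow> 'v2"
    and \<Lambda> :: "'h1 set"
  assumes "finite_forest_algebra A1" and "finite_forest_algebra A2"
    and "fa_hom A1 A2 bh bv"
    and "reach_class A1 \<Lambda>"
  shows "(\<exists>\<Gamma>. reach_class A2 \<Gamma> \<and> bh ` \<Lambda> \<subseteq> \<Gamma>) \<and>
         (\<forall>\<Gamma>. reach_class A2 \<Gamma> \<and> fa_hom_onto A1 A2 bh bv \<and> minimal_class_into A1 bh \<Gamma> \<Lambda>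
              \<longrightarrow> bh ` \<Lambda> = \<Gamma> \<and>
                  (idem_comm_H A2 \<longrightarrow>
                     (\<forall>\<Lambda>'. minimal_class_into A1 bh \<Gamma> \<Lambda>' \<longrightarrow> \<Lambda>' = \<Lambda>)))"
proof -
  have F1: "forest_algebra A1" and F2: "forest_algebra A2"
    using assms(1,2) unfolding finite_forest_algebra_def by auto
  have hom: "fa_hom A1 A2 bh bv" by fact
  have hc: "\<And>h. h \<in> hcar A1 \<Longrightarrow> bh h \<in> hcar A2" using hom unfolding fa_hom_def by blast
  obtain h0 where h0: "h0 \<in> hcar A1" "\<Lambda> = cls A1 h0" using assms(4) reach_class_cls by metis
  have P1: "\<exists>\<Gamma>. reach_class A2 \<Gamma> \<and> bh ` \<Lambda> \<subseteq> \<Gamma>"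
    using h0 hom_cls[OF hom, of h0] hc reach_class_cls by metis
  have key: "bh ` L = G"
    if G: "reach_class A2 G" and on: "fa_hom_onto A1 A2 bh bv" and m: "minimal_class_into A1 bh G L"
    for G L
  proof
    show "bh ` L \<subseteq> G" using m unfolding minimal_class_into_def by blast
    obtain h where h: "h \<in> hcar A1" "L = cls A1 h" using m reach_class_cls
      unfolding minimal_class_into_def by metis
    have hL: "h \<in> L" using h mem_cls F1 by metis
    hence bhG: "bh h \<in> G" using m unfolding minimal_class_into_def by blast
    obtain x where x: "x \<in> hcar A2" "G = cls A2 x" using G reach_class_cls by metis
    have GG: "G = cls A2 (bh h)" using cls_eq[OF F2] bhG x by metis
    show "G \<subseteq> bh ` L"
    proof
      fix g assume "g \<in> G"
      hence "reach A2 g (bh h)" using GG unfolding cls_def by blast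
      then obtain k where k: "reach A1 k h" "bh k = g" using reach_onto[OF hom on _ h(1) F1] by blast
      have kc: "k \<in> hcar A1" using k unfolding reach_def by blast
      have "bh ` cls A1 k \<subseteq> G"
      proof
        fix y assume "y \<in> bh ` cls A1 k"
        hence "y \<in> cls A2 g" using hom_cls[OF hom, of k] k by blast
        thus "y \<in> G" using \<open>g \<in> G\<close> GG cls_eq[OF F2] by metis
      qed
      moreover have "class_le A1 (cls A1 k) L"
        unfolding class_le_def using k(1) hL mem_cls[OF F1 kc] by blast
      moreover have "reach_class A1 (cls A1 k)" using kc reach_class_cls by blast
      ultimately have "cls A1 k = L" using m unfolding minimal_class_into_def by blast
      thus "g \<in> bh ` L" using mem_cls[OF F1 kc] k by blast
    qed
  qed
  show ?thesis
  proof (intro conjI allI impI)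
    show "\<exists>\<Gamma>. reach_class A2 \<Gamma> \<and> bh ` \<Lambda> \<subseteq> \<Gamma>" by (rule P1)
  next
    fix G assume a: "reach_class A2 G \<and> fa_hom_onto A1 A2 bh bv \<and> minimal_class_into A1 bh G \<Lambda>"
    then show "bh ` \<Lambda> = G" using key by blast
  next
    fix G L' assume a: "reach_class A2 G \<and> fa_hom_onto A1 A2 bh bv \<and> minimal_class_into A1 bh G \<Lambda>"
      and ic: "idem_comm_H A2" and m': "minimal_class_into A1 bh G L'"
    have e1: "bh ` \<Lambda> = G" and e2: "bh ` L' = G" using a m' key by blast+
    have h0L: "h0 \<in> \<Lambda>" using h0 mem_cls[OF F1] by metis
    then obtain h' where h': "h' \<in> L'" "bh h' = bh h0" using e1 e2 by (metis imageE imageI)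
    obtain h1 where h1: "h1 \<in> hcar A1" "L' = cls A1 h1" using m' reach_class_cls
      unfolding minimal_class_into_def by metis
    have h'c: "h' \<in> hcar A1" using h' h1 unfolding cls_def by blast
    define s where "s = hadd A1 h0 h'"
    have r1: "reach A1 s h0" and r2: "reach A1 s h'" using sum_reach[OF F1 h0(1) h'c] s_def by auto
    have sc: "s \<in> hcar A1" using r1 unfolding reach_def by blast
    have "bh s = hadd A2 (bh h0) (bh h')" using hom h0(1) h'c unfolding s_def fa_hom_def by blast
    also have "\<dots> = bh h0" using h'(2) ic hc[OF h0(1)] unfolding idem_comm_H_def by simp
    finally have bs: "bh s = bh h0" .
    have bhG: "bh h0 \<in> G" using e1 h0L by blast
    obtain x where x: "x \<in> hcar A2" "G = cls A2 x" using a reach_class_cls by metis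
    have sub: "bh ` cls A1 s \<subseteq> G"
    proof
      fix y assume "y \<in> bh ` cls A1 s"
      hence "y \<in> cls A2 (bh h0)" using hom_cls[OF hom, of s] unfolding bs by blast
      thus "y \<in> G" using bhG x cls_eq[OF F2] by metis
    qed
    have rc: "reach_class A1 (cls A1 s)" using sc reach_class_cls by blast
    have "class_le A1 (cls A1 s) \<Lambda>" unfolding class_le_def using r1 h0L mem_cls[OF F1 sc] by blast
    hence "cls A1 s = \<Lambda>" using a sub rc unfolding minimal_class_into_def by blast
    moreover have "class_le A1 (cls A1 s) L'" unfolding class_le_def using r2 h' mem_cls[OF F1 sc] by blast
    hence "cls A1 s = L'" using m' sub rc unfolding minimal_class_into_def by blast
    ultimately show "L' = \<Lambda>" by simp
  qed
qed

end
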